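(* Let $n,m\ge 0$ and let $k_1\ge\dots\ge k_n\ge 0$ and $l_1\ge\dots\ge l_m\ge 0$ be integers. If \[ \prod_{i=1}^n\left(5\cdot\left(\tfrac32\right)^{k_i-1}\left(2^{2k_i-1}+1\right)\right)=\prod_{j=1}^m\left(5\cdot\left(\tfrac32\right)^{l_j-1}\left(2^{2l_j-1}+1\right)\right) \] as rational numbers, then $n=m$ and $(k_1,\dots,k_n)=(l_1,\dots,l_m)$. *)

theory Defs
  imports Complex_Main
begin

text \<open>The factor 5 * (3/2)^(k-1) * (2^(2k-1) + 1), evaluated in the rationals with
  integer exponents (so k = 0 is allowed).\<close>
definition fac :: "nat \<Rightarrow> rat" where
  "fac k = 5 * (3/2) powi (int k - 1) * (2 powi (2 * int k - 1) + 1)"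

end

theory Submission
  imports Defs "HOL-Number_Theory.Number_Theory"
begin


definition F :: "nat \<Rightarrow> nat" where "F m = 2^m + 1"

lemma F_odd: "m > 0 \<Longrightarrow> odd (F m)" by (simp add: F_def)
lemma F_pos: "F m > 0" by (simp add: F_def)

lemma sq_aux: "(x::nat) \<ge> 1 \<Longrightarrow> x * x = (x + 1) * (x - 1) + 1"
  by (cases x) auto

lemma F_sq: "2^(2*m) = F m * (2^m - 1) + (1::nat)"
proof -
  have one: "(1::nat) \<le> 2^m" by simp
  have e: "(2::nat)^(2*m) = 2^m * 2^m" by (simp add: power_add[symmetric] mult_2)
  from sq_aux[OF one] show ?thesis unfolding F_def e by simp
qed

lemma dvd_F_iff:
  assumes p: "prime p" and m: "odd m" and podd: "odd p"
  shows "p dvd F m \<longleftrightarrow> ord p 2 dvd 2*m \<and> \<not> ord p 2 dvd m"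
proof
  assume h: "p dvd F m"
  have "[2^(2*m) = 1] (mod p)"
    using h F_sq[of m] cong_altdef_nat[of 1 "2^(2*m)" p] by simp
  hence "ord p 2 dvd 2*m" using ord_divides by blast
  moreover have "\<not> ord p 2 dvd m"
  proof
    assume "ord p 2 dvd m"
    hence "[2^m = 1] (mod p)" using ord_divides by blast
    hence "p dvd 2^m - 1" using cong_to_1_nat by blast
    moreover have "p dvd 2^m + 1" using h by (simp add: F_def)
    ultimately have "p dvd (2^m+1) - (2^m - 1)" using dvd_diff_nat by blast
    moreover have "(2::nat)^m + 1 - (2^m - 1) = 2"
      using one_le_power[of "2::nat" m] by linarith
    ultimately have "p dvd 2" by simp
    thus False using podd p by (metis dvd_refl prime_nat_iff two_is_prime_nat primes_dvd_imp_eq even_numeral)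
  qed
  ultimately show "ord p 2 dvd 2*m \<and> \<not> ord p 2 dvd m" by blast
next
  assume h: "ord p 2 dvd 2*m \<and> \<not> ord p 2 dvd m"
  hence "[2^(2*m) = 1] (mod p)" using ord_divides by blast
  hence "p dvd 2^(2*m) - 1" using cong_to_1_nat by blast
  hence "p dvd F m * (2^m - 1)" using F_sq[of m] by simp
  hence "p dvd F m \<or> p dvd 2^m - 1" using p prime_dvd_mult_iff by blast
  moreover have "\<not> p dvd 2^m - 1"
  proof
    assume "p dvd 2^m - 1"
    hence "[2^m = 1] (mod p)" using cong_altdef_nat[of 1 "2^m" p] by simp
    thus False using h ord_divides by blast
  qed
  ultimately show "p dvd F m" by blast
qed

lemma ord_struct:
  assumes p: "prime p" and a: "odd a" and pa: "p dvd F a"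
  obtains t where "ord p 2 = 2*t" "t dvd a" "\<And>m. odd m \<Longrightarrow> p dvd F m \<longleftrightarrow> t dvd m"
proof -
  have podd: "odd p" using pa F_odd[of a] a by (metis dvd_trans odd_pos)
  have o: "ord p 2 dvd 2*a" "\<not> ord p 2 dvd a" using dvd_F_iff[OF p a podd] pa by auto
  have "even (ord p 2)"
  proof (rule ccontr)
    assume "odd (ord p 2)"
    hence "coprime (ord p 2) 2" by simp
    hence "ord p 2 dvd a" using o(1) coprime_dvd_mult_right_iff by blast
    thus False using o(2) by blast
  qed
  then obtain t where t: "ord p 2 = 2*t" by blast
  have ta: "t dvd a" using o(1) t by simp
  have "p dvd F m \<longleftrightarrow> t dvd m" if "odd m" for m
  proof -
    have "\<not> 2*t dvd m" using that by (metis dvd_mult_left dvd_trans)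
    thus ?thesis using dvd_F_iff[OF p that podd] t by simp
  qed
  thus ?thesis using that t ta by blast
qed



lemma two_sum_lt: "2 * (\<Sum>i<n. i) = n * (n - 1::nat)"
proof (induction n)
  case 0 then show ?case by simp
next
  case (Suc n) then show ?case by (cases n) (simp_all add: algebra_simps)
qed

lemma sum_pow_cong:
  fixes z :: int
  assumes "[z = 1] (mod p)"
  shows "[(\<Sum>i<n. z^i) = int n] (mod p)"
proof -
  have "[(\<Sum>i<n. z^i) = (\<Sum>i<n. 1^i)] (mod p)"
    by (rule cong_sum, rule cong_pow, rule assms)
  thus ?thesis by simp
qed

lemma lte_Y:
  fixes z :: int and p :: nat
  assumes "prime p" "odd p" "int p dvd z - 1"
  shows "int p ^ 2 dvd (\<Sum>i<p. z^i) - int p"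
proof -
  have c: "[z = 1] (mod int p)" using assms(3) by (simp add: cong_iff_dvd_diff)
  have e1: "(\<Sum>i<p. z^i) - int p = (\<Sum>i<p. z^i - 1)" by (simp add: sum_subtractf)
  have e2: "z^i - 1 = (z - 1) * (\<Sum>j<i. z^j)" for i by (rule power_diff_1_eq)
  have e3: "(\<Sum>i<p. z^i) - int p = (z - 1) * (\<Sum>i<p. \<Sum>j<i. z^j)"
    unfolding e1 e2 by (simp add: sum_distrib_left)
  have "[(\<Sum>i<p. \<Sum>j<i. z^j) = (\<Sum>i<p. int i)] (mod int p)"
    by (rule cong_sum, rule sum_pow_cong, rule c)
  moreover have "(\<Sum>i<p. int i) = int p * int ((p - 1) div 2)"
  proof -
    have "2 * (\<Sum>i<p. i) = p * (p - 1)" by (rule two_sum_lt)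
    moreover have "even (p - 1)" using assms(2) prime_gt_0_nat[OF assms(1)] by simp
    then obtain k where k: "p - 1 = 2 * k" by blast
    ultimately have "2 * (\<Sum>i<p. i) = 2 * (p * k)" by simp
    hence "(\<Sum>i<p. i) = p * ((p - 1) div 2)" using k by simp
    hence "int (\<Sum>i<p. i) = int p * int ((p - 1) div 2)" by simp
    thus ?thesis by simp
  qed
  ultimately have "int p dvd (\<Sum>i<p. \<Sum>j<i. z^j)"
    by (metis cong_dvd_iff dvd_triv_left)
  hence "int p * int p dvd (z - 1) * (\<Sum>i<p. \<Sum>j<i. z^j)"
    using assms(3) by (simp add: mult_dvd_mono)
  thus ?thesis unfolding e3 by (simp add: power2_eq_square)
qed

lemma lte_step:
  fixes x p q :: nat
  assumes p: "prime p" "odd p" and px: "p dvd x + 1" and q: "prime q" "odd q"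
  shows "multiplicity p (x^q + 1) = multiplicity p (x+1) + (if p = q then 1 else 0)"
proof -
  define z :: int where "z = - int x"
  define Y where "Y = (\<Sum>i<q. z^i)"
  have zq: "z ^ q = - (int x ^ q)" unfolding z_def using q(2) by (simp add: power_minus_odd)
  have "1 - z^q = (1 - z) * Y" unfolding Y_def by (rule one_diff_power_eq)
  hence id: "int (x^q + 1) = int (x+1) * Y" unfolding zq by (simp add: z_def)
  have "int (x^q + 1) > 0" by (simp only: of_nat_0_less_iff)
  hence "Y > 0" using id by (simp add: zero_less_mult_iff)
  then obtain y where y: "Y = int y" by (metis less_imp_le nonneg_int_cases)
  have nid: "x^q + 1 = (x+1) * y" using id unfolding y by (metis of_nat_eq_iff of_nat_mult)
  have ypos: "y \<noteq> 0" using \<open>Y > 0\<close> y by simp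
  have zc: "int p dvd z - 1"
  proof -
    have "z - 1 = - int (x + 1)" by (simp add: z_def)
    thus ?thesis using px by (metis dvd_minus_iff int_dvd_int_iff)
  qed
  have c: "[z = 1] (mod int p)" using zc by (simp add: cong_iff_dvd_diff)
  have Yc: "[Y = int q] (mod int p)" unfolding Y_def by (rule sum_pow_cong[OF c])
  have my: "multiplicity p y = (if p = q then 1 else 0)"
  proof (cases "p = q")
    case False
    have "\<not> p dvd y"
    proof
      assume "p dvd y"
      hence "int p dvd Y" using y by simp
      hence "int p dvd int q" using Yc by (metis cong_dvd_iff)
      hence "p dvd q" by simp
      thus False using False p(1) q(1) by (metis primes_dvd_imp_eq)
    qed
    thus ?thesis using False by (simp add: not_dvd_imp_multiplicity_0)
  next
    case True
    have d: "int p ^ 2 dvd Y - int p" unfolding Y_def using lte_Y[OF p zc] True by simp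
    have "int p dvd Y" using d
      by (metis dvd_diff_commute dvd_add_right_iff dvd_power dvd_refl zero_less_numeral diff_add_cancel dvd_trans dvd_add dvd_triv_left power2_eq_square)
    hence "p ^ 1 dvd y" using y by simp
    moreover have "\<not> p ^ Suc 1 dvd y"
    proof
      assume h: "p ^ Suc 1 dvd y"
      have "int (p ^ 2) dvd int y" using h by (simp only: int_dvd_int_iff numeral_2_eq_2 One_nat_def)
      hence h2: "int p ^ 2 dvd Y" using y by simp
      have "int p ^ 2 dvd Y - (Y - int p)" using dvd_diff[OF h2 d] .
      hence "int (p ^ 2) dvd int p" by simp
      hence "p ^ 2 dvd p" by (simp only: int_dvd_int_iff)
      hence "p * p \<le> p" using prime_gt_0_nat[OF p(1)] by (simp add: power2_eq_square dvd_imp_le)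
      moreover have "p * 2 \<le> p * p" using prime_ge_2_nat[OF p(1)] by simp
      ultimately show False using prime_ge_2_nat[OF p(1)] by linarith
    qed
    ultimately show ?thesis using True by (simp add: multiplicity_eqI)
  qed
  have "multiplicity p (x^q+1) = multiplicity p (x+1) + multiplicity p y"
    unfolding nid using ypos p(1) prime_elem_multiplicity_mult_distrib[of p "x+1" y] by simp
  thus ?thesis using my by simp
qed


lemma F_dvd:
  assumes "odd r" shows "F t dvd F (t*r)"
proof -
  have c: "[int (2^t) = -1] (mod int (F t))"
    by (simp add: F_def cong_iff_dvd_diff add.commute)
  have "[int (2^t) ^ r = (-1) ^ r] (mod int (F t))" by (rule cong_pow[OF c])
  hence "[int (2^(t*r)) = -1] (mod int (F t))" using assms by (simp add: power_mult)
  hence "int (F t) dvd int (2^(t*r)) + 1" by (simp add: cong_iff_dvd_diff)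
  thus ?thesis unfolding F_def by (metis of_nat_1 of_nat_add int_dvd_int_iff)
qed

lemma lte:
  assumes p: "prime p" "odd p" and pt: "p dvd F t" and n: "odd n"
  shows "multiplicity p (F (t*n)) = multiplicity p (F t) + multiplicity p n"
  using n
proof (induction n rule: less_induct)
  case (less n)
  show ?case
  proof (cases "n = 1")
    case True then show ?thesis by simp
  next
    case False
    have n0: "n \<noteq> 0" using less.prems using odd_pos by blast
    obtain q where q: "prime q" "q dvd n" using False prime_factor_nat by blast
    then obtain r where r: "n = q * r" by blast
    have qodd: "odd q" using q(2) less.prems by (metis dvd_trans)
    have rodd: "odd r" using r less.prems by simp
    have r0: "r \<noteq> 0" using rodd using odd_pos by blast
    have "r < n" using r prime_ge_2_nat[OF q(1)] r0 by simp
    hence IH: "multiplicity p (F (t*r)) = multiplicity p (F t) + multiplicity p r"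
      using less.IH rodd by blast
    have pd: "p dvd 2^(t*r) + 1" using dvd_trans[OF pt F_dvd[OF rodd]] by (simp add: F_def)
    have e: "F (t*n) = (2^(t*r))^q + 1" unfolding F_def r by (simp add: power_mult[symmetric] ac_simps)
    have "multiplicity p (F (t*n)) = multiplicity p (F (t*r)) + (if p = q then 1 else 0)"
      unfolding e using lte_step[OF p pd q(1) qodd] by (simp add: F_def)
    moreover have "multiplicity p n = multiplicity p q + multiplicity p r"
      unfolding r using q(1) r0 p(1) prime_elem_multiplicity_mult_distrib[of p q r]
      by (simp add: prime_gt_0_nat)
    moreover have "multiplicity p q = (if p = q then 1 else 0)"
    proof (cases "p = q")
      case True then show ?thesis using p(1) by (simp add: multiplicity_prime)
    next
      case False
      hence "\<not> p dvd q" using p(1) q(1) by (metis primes_dvd_imp_eq)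
      thus ?thesis using False by (simp add: not_dvd_imp_multiplicity_0)
    qed
    ultimately show ?thesis using IH by simp
  qed
qed


definition tp :: "nat \<Rightarrow> nat" where "tp p = ord p 2 div 2"

lemma F_odd_dvd_imp_odd: "odd a \<Longrightarrow> p dvd F a \<Longrightarrow> odd p"
  using F_odd[of a] by (metis dvd_trans odd_pos)

lemma tp_props:
  assumes p: "prime p" and a: "odd a" and pa: "p dvd F a"
  shows "ord p 2 = 2 * tp p" "tp p dvd a" "\<And>m. odd m \<Longrightarrow> p dvd F m \<longleftrightarrow> tp p dvd m"
proof -
  obtain t where t: "ord p 2 = 2*t" "t dvd a" "\<And>m. odd m \<Longrightarrow> p dvd F m \<longleftrightarrow> t dvd m"
    using ord_struct[OF p a pa] by blast
  have "tp p = t" using t(1) by (simp add: tp_def)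
  thus "ord p 2 = 2 * tp p" "tp p dvd a" "\<And>m. odd m \<Longrightarrow> p dvd F m \<longleftrightarrow> tp p dvd m" using t by auto
qed

lemma tp_lt:
  assumes p: "prime p" and a: "odd a" and pa: "p dvd F a"
  shows "tp p < p"
proof -
  have podd: "odd p" using F_odd_dvd_imp_odd[OF a pa] .
  have "\<not> p dvd 2"
  proof
    assume "p dvd 2"
    hence "p \<le> 2" by (simp add: dvd_imp_le)
    hence "p = 2" using prime_ge_2_nat[OF p] by simp
    thus False using podd by simp
  qed
  hence "[2^(p-1) = 1] (mod p)" using fermat_theorem[OF p] by blast
  hence "ord p 2 dvd p - 1" using ord_divides by blast
  hence "2 * tp p dvd p - 1" using tp_props(1)[OF p a pa] by simp
  moreover have "p - 1 > 0" using prime_ge_2_nat[OF p] by simp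
  ultimately have "2 * tp p \<le> p - 1" using dvd_imp_le by blast
  thus ?thesis using prime_ge_2_nat[OF p] by linarith
qed

lemma val_F:
  assumes p: "prime p" and a: "odd a" and pa: "p dvd F a" and m: "m dvd a"
  shows "multiplicity p (F m) = (if tp p dvd m then multiplicity p (F (tp p)) + multiplicity p (m div tp p) else 0)"
proof -
  have podd: "odd p" using F_odd_dvd_imp_odd[OF a pa] .
  have modd: "odd m" using m a dvd_trans[of 2 m a] by blast
  note tpp = tp_props[OF p a pa]
  show ?thesis
  proof (cases "tp p dvd m")
    case True
    have todd: "odd (tp p)" using tpp(2) a dvd_trans[of 2 "tp p" a] by blast
    have ptp: "p dvd F (tp p)" using tpp(3)[OF todd] by simp
    have e: "m = tp p * (m div tp p)" using True by simp
    have "odd (tp p * (m div tp p))" using modd e by simp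
    hence "odd (m div tp p)" by simp
    hence "multiplicity p (F (tp p * (m div tp p))) = multiplicity p (F (tp p)) + multiplicity p (m div tp p)"
      using lte[OF p podd ptp] by blast
    thus ?thesis using True e by simp
  next
    case False
    hence "\<not> p dvd F m" using tpp(3)[OF modd] by simp
    thus ?thesis using False by (simp add: not_dvd_imp_multiplicity_0)
  qed
qed

lemma prod_primes_dvd:
  fixes T :: "nat set"
  assumes "finite T" "\<forall>q\<in>T. prime q" "T \<subseteq> prime_factors n"
  shows "\<Prod>T dvd n"
  using assms
proof (induction T rule: finite_induct)
  case empty then show ?case by simp
next
  case (insert q T)
  have "coprime q (\<Prod>T)"
  proof (rule prod_coprime_right)
    fix i assume "i \<in> T"
    thus "coprime q i" using insert primes_coprime[of q i] by auto
  qed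
  moreover have "q dvd n" using insert by auto
  moreover have "\<Prod>T dvd n" using insert by auto
  ultimately show ?case using insert by (simp add: divides_mult)
qed

lemma prime_factors_prod_primes:
  fixes T :: "nat set"
  assumes "finite T" "\<forall>q\<in>T. prime q"
  shows "prime_factors (\<Prod>T) = T"
proof -
  have "0 \<notin> id ` T" using assms by auto
  hence "prime_factors (\<Prod>T) = \<Union>((prime_factors \<circ> id) ` T)"
    using prime_factors_prod[OF assms(1), of id] by simp
  also have "\<dots> = T" using assms(2) by (auto simp: prime_prime_factors)
  finally show ?thesis .
qed

lemma prod_primes_dvd_iff:
  fixes T :: "nat set"
  assumes "finite T" "\<forall>q\<in>T. prime q" "n \<noteq> 0"
  shows "\<Prod>T dvd n \<longleftrightarrow> T \<subseteq> prime_factors n"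
proof
  assume h: "\<Prod>T dvd n"
  show "T \<subseteq> prime_factors n"
  proof
    fix q assume q: "q \<in> T"
    have "q dvd \<Prod>T" using dvd_prodI[of T q "\<lambda>x. x"] q assms(1) by simp
    hence "q dvd n" using h by (rule dvd_trans)
    thus "q \<in> prime_factors n" using q assms by (auto simp: in_prime_factors_iff)
  qed
qed (use prod_primes_dvd assms in blast)

lemma mult_prod_primes:
  fixes T :: "nat set"
  assumes "finite T" "\<forall>q\<in>T. prime q" "prime p"
  shows "multiplicity p (\<Prod>T) = (if p \<in> T then 1 else 0)"
proof -
  have "0 \<notin> id ` T" using assms by auto
  hence "multiplicity p (\<Prod>T) = (\<Sum>q\<in>T. multiplicity p q)"
    using prime_elem_multiplicity_prod_distrib[of p id T] assms by simp
  also have "\<dots> = (\<Sum>q\<in>T. if q = p then 1 else 0)"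
  proof (rule sum.cong)
    fix q assume "q \<in> T"
    hence "prime q" using assms by auto
    thus "multiplicity p q = (if q = p then 1 else 0)"
    proof (cases "q = p")
      case False
      hence "\<not> p dvd q" using primes_dvd_imp_eq[of p q] assms(3) \<open>prime q\<close> by auto
      thus ?thesis using False by (simp add: not_dvd_imp_multiplicity_0)
    qed (use assms(3) in \<open>simp add: multiplicity_prime\<close>)
  qed simp
  also have "\<dots> = (if p \<in> T then 1 else 0)" using assms(1) by (simp add: sum.delta')
  finally show ?thesis .
qed

lemma alt_sum1:
  fixes R :: "'a set"
  assumes "finite R"
  shows "(\<Sum>T\<in>Pow R. (-1::int) ^ card T) = (if R = {} then 1 else 0)"
proof -
  have "(\<Prod>x\<in>R. (1::int) - 1) = (\<Sum>X\<in>Pow R. (- 1) ^ card X * prod (\<lambda>_. 1) X * prod (\<lambda>_. 1) (R - X))"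
    by (rule prod_diff_conv_sum[OF assms])
  hence "(\<Sum>T\<in>Pow R. (-1::int) ^ card T) = 0 ^ card R" by simp
  thus ?thesis using assms by (cases "R = {}") (auto simp: card_gt_0_iff)
qed

lemma alt_sum2:
  fixes p :: nat
  assumes "finite R" "p \<in> R"
  shows "(\<Sum>T\<in>Pow R. (-1::int) ^ card T * (if p \<in> T then 1 else 0)) = (if R = {p} then -1 else 0)"
proof -
  define g :: "nat \<Rightarrow> int" where "g x = (if x = p then 0 else 1)" for x
  have "(\<Prod>x\<in>R. (1::int) - g x) = (\<Sum>X\<in>Pow R. (- 1) ^ card X * prod g X * prod (\<lambda>_. 1) (R - X))"
    by (rule prod_diff_conv_sum[OF assms(1)])
  moreover have "(\<Prod>x\<in>R. (1::int) - g x) = (if R = {p} then 1 else 0)"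
  proof -
    have "(\<Prod>x\<in>R. (1::int) - g x) = (1 - g p) * (\<Prod>x\<in>R - {p}. 1 - g x)"
      using assms by (simp add: prod.remove)
    also have "\<dots> = (\<Prod>x\<in>R - {p}. (0::int))" by (simp add: g_def)
    also have "\<dots> = (0::int) ^ card (R - {p})" by simp
    also have "\<dots> = (if R = {p} then 1 else 0)"
    proof (cases "R = {p}")
      case False
      hence "R - {p} \<noteq> {}" using assms(2) by auto
      hence "card (R - {p}) > 0" using assms(1) by (simp add: card_gt_0_iff)
      thus ?thesis using False by simp
    qed simp
    finally show ?thesis .
  qed
  moreover have pg: "prod g X = (if p \<in> X then 0 else 1)" if "X \<subseteq> R" for X
    using that assms(1) by (auto simp: g_def finite_subset)
  ultimately have h0: "(\<Sum>X\<in>Pow R. (- 1::int) ^ card X * prod g X * prod (\<lambda>_. 1) (R - X)) = (if R = {p} then 1 else 0)"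
    by simp
  have h1: "(\<Sum>X\<in>Pow R. (- 1::int) ^ card X * (if p \<in> X then 0 else 1)) = (\<Sum>X\<in>Pow R. (- 1::int) ^ card X * prod g X * prod (\<lambda>_. 1) (R - X))"
    by (rule sum.cong) (auto simp: pg)
  have "(\<Sum>T\<in>Pow R. (-1::int) ^ card T * (if p \<in> T then 1 else 0))
      = (\<Sum>T\<in>Pow R. (-1::int) ^ card T - (- 1::int) ^ card T * (if p \<in> T then 0 else 1))"
    by (rule sum.cong) auto
  also have "\<dots> = (\<Sum>T\<in>Pow R. (-1::int) ^ card T) - (\<Sum>X\<in>Pow R. (- 1::int) ^ card X * (if p \<in> X then 0 else 1))"
    by (rule sum_subtractf)
  also have "\<dots> = (if R = {p} then -1 else 0)"
    using alt_sum1[OF assms(1)] h0 h1 assms(2) by auto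
  finally show ?thesis .
qed


definition Ev :: "nat \<Rightarrow> nat set set" where "Ev a = {T \<in> Pow (prime_factors a). even (card T)}"
definition Od :: "nat \<Rightarrow> nat set set" where "Od a = {T \<in> Pow (prime_factors a). odd (card T)}"
definition Num :: "nat \<Rightarrow> nat" where "Num a = (\<Prod>T\<in>Ev a. F (a div \<Prod>T))"
definition Den :: "nat \<Rightarrow> nat" where "Den a = (\<Prod>T\<in>Od a. F (a div \<Prod>T))"

lemma PQ_facts:
  fixes a :: nat
  assumes "a > 0" "T \<in> Pow (prime_factors a)"
  shows "finite T" "\<forall>q\<in>T. prime q" "\<Prod>T dvd a" "a div \<Prod>T dvd a" "\<Prod>T > 0"
proof -
  show f: "finite T" using assms finite_subset by auto
  show pr: "\<forall>q\<in>T. prime q" using assms by auto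
  show d: "\<Prod>T dvd a" using prod_primes_dvd[OF f pr] assms by auto
  thus "a div \<Prod>T dvd a" by (metis dvd_div_mult_self dvd_triv_left)
  show "\<Prod>T > 0" using pr f by (simp add: prime_gt_0_nat prod_pos)
qed

lemma val_term:
  assumes a: "odd a" and p: "prime p" and pa: "p dvd F a" and T: "T \<in> Pow (prime_factors a)"
  shows "int (multiplicity p (F (a div \<Prod>T))) =
    (if T \<subseteq> prime_factors (a div tp p) then int (multiplicity p (F (tp p))) + int (multiplicity p (a div tp p)) - (if p \<in> T then 1 else 0) else 0)"
proof -
  have a0: "a > 0" using a by (simp add: odd_pos)
  note PQ = PQ_facts[OF a0 T]
  note tpp = tp_props[OF p a pa]
  define t where "t = tp p"
  have t0: "t \<noteq> 0" using tpp(2) a0 t_def by (metis dvd_0_left_iff neq0_conv)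
  have ta: "t dvd a" using tpp(2) t_def by simp
  have at0: "a div t \<noteq> 0" using ta t0 a0 by (metis dvd_div_eq_0_iff neq0_conv)
  have eqv: "t dvd a div \<Prod>T \<longleftrightarrow> T \<subseteq> prime_factors (a div t)"
  proof -
    have pT0: "\<Prod>T \<noteq> 0" using PQ(5) by simp
    have "t dvd a div \<Prod>T \<longleftrightarrow> t * \<Prod>T dvd a" using dvd_div_iff_mult[OF pT0 PQ(3)] .
    also have "\<dots> \<longleftrightarrow> \<Prod>T dvd a div t" using dvd_div_iff_mult[of t a "\<Prod>T"] t0 ta by (simp add: mult.commute)
    also have "\<dots> \<longleftrightarrow> T \<subseteq> prime_factors (a div t)" using prod_primes_dvd_iff[OF PQ(1,2) at0] .
    finally show ?thesis .
  qed
  have vf: "multiplicity p (F (a div \<Prod>T)) = (if t dvd a div \<Prod>T then multiplicity p (F t) + multiplicity p (a div \<Prod>T div t) else 0)"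
    using val_F[OF p a pa PQ(4)] t_def by simp
  show ?thesis
  proof (cases "T \<subseteq> prime_factors (a div t)")
    case False
    thus ?thesis using vf eqv t_def by simp
  next
    case True
    have d1: "\<Prod>T dvd a div t" using True prod_primes_dvd[OF PQ(1,2)] by simp
    have e1: "a div \<Prod>T div t = a div t div \<Prod>T" by (simp add: div_mult2_eq[symmetric] mult.commute)
    have e2: "a div t = (a div t div \<Prod>T) * \<Prod>T" using d1 by simp
    have nz: "a div t div \<Prod>T \<noteq> 0" using e2 at0 by (metis mult_zero_left)
    have pT0: "\<Prod>T \<noteq> 0" using PQ(5) by simp
    have "multiplicity p ((a div t div \<Prod>T) * \<Prod>T) = multiplicity p (a div t div \<Prod>T) + multiplicity p (\<Prod>T)"
      by (rule prime_elem_multiplicity_mult_distrib[OF prime_imp_prime_elem[OF p] nz pT0])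
    hence "multiplicity p (a div t) = multiplicity p (a div t div \<Prod>T) + multiplicity p (\<Prod>T)"
      by (simp only: e2[symmetric])
    moreover have "multiplicity p (\<Prod>T) = (if p \<in> T then 1 else 0)" by (rule mult_prod_primes[OF PQ(1,2) p])
    ultimately have "int (multiplicity p (a div \<Prod>T div t)) = int (multiplicity p (a div t)) - (if p \<in> T then 1 else 0)"
      unfolding e1 by auto
    thus ?thesis using vf eqv True t_def by simp
  qed
qed

lemma val_diff:
  assumes a: "odd a" and p: "prime p" and pa: "p dvd F a" and ne: "tp p \<noteq> a"
  shows "int (multiplicity p (Num a)) = int (multiplicity p (Den a)) + (if prime_factors (a div tp p) = {p} then 1 else 0)"
proof -
  have a0: "a > 0" using a by (simp add: odd_pos)
  define Q where "Q = prime_factors a"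
  define R where "R = prime_factors (a div tp p)"
  define c where "c = int (multiplicity p (F (tp p))) + int (multiplicity p (a div tp p))"
  define v where "v T = int (multiplicity p (F (a div \<Prod>T)))" for T
  have fQ: "finite Q" by (simp add: Q_def)
  have vT: "v T = (if T \<subseteq> R then c - (if p \<in> T then 1 else 0) else 0)" if "T \<in> Pow Q" for T
    using val_term[OF a p pa that[unfolded Q_def]] unfolding v_def c_def R_def by simp
  have fE: "finite (Ev a)" "finite (Od a)" by (simp_all add: Ev_def Od_def)
  have mN: "int (multiplicity p (Num a)) = (\<Sum>T\<in>Ev a. v T)"
  proof -
    have z: "0 \<notin> (\<lambda>T. F (a div \<Prod>T)) ` Ev a" by (auto simp: F_def)
    have "multiplicity p (Num a) = (\<Sum>T\<in>Ev a. multiplicity p (F (a div \<Prod>T)))"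
      unfolding Num_def by (rule prime_elem_multiplicity_prod_distrib[OF prime_imp_prime_elem[OF p] z fE(1)])
    thus ?thesis by (simp add: v_def)
  qed
  have mD: "int (multiplicity p (Den a)) = (\<Sum>T\<in>Od a. v T)"
  proof -
    have z: "0 \<notin> (\<lambda>T. F (a div \<Prod>T)) ` Od a" by (auto simp: F_def)
    have "multiplicity p (Den a) = (\<Sum>T\<in>Od a. multiplicity p (F (a div \<Prod>T)))"
      unfolding Den_def by (rule prime_elem_multiplicity_prod_distrib[OF prime_imp_prime_elem[OF p] z fE(2)])
    thus ?thesis by (simp add: v_def)
  qed
  have "(\<Sum>T\<in>Pow Q. (-1::int) ^ card T * v T) = (\<Sum>T\<in>Pow Q. if even (card T) then v T else - v T)"
    by (rule sum.cong) auto
  also have "\<dots> = (\<Sum>T\<in>Ev a. v T) + (\<Sum>T\<in>Od a. - v T)"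
  proof -
    have EvE: "Pow Q \<inter> {T. even (card T)} = Ev a" unfolding Ev_def Q_def by auto
    have OdE: "Pow Q \<inter> - {T. even (card T)} = Od a" unfolding Od_def Q_def by auto
    have fP: "finite (Pow Q)" using fQ by simp
    show ?thesis using sum.If_cases[OF fP, of "\<lambda>T. even (card T)" v "\<lambda>T. - v T"] unfolding EvE OdE .
  qed
  finally have s1: "(\<Sum>T\<in>Pow Q. (-1::int) ^ card T * v T) = int (multiplicity p (Num a)) - int (multiplicity p (Den a))"
    using mN mD by (simp add: sum_negf)
  have RQ: "R \<subseteq> Q"
  proof -
    have "a div tp p dvd a" using tp_props(2)[OF p a pa] by (metis dvd_div_mult_self dvd_triv_left)
    show ?thesis
    proof
      fix q assume "q \<in> R"
      hence "prime q" "q dvd a div tp p" unfolding R_def by (auto simp: in_prime_factors_iff)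
      thus "q \<in> Q" unfolding Q_def using a0 \<open>a div tp p dvd a\<close> dvd_trans[of q "a div tp p" a]
        by (auto simp: in_prime_factors_iff)
    qed
  qed
  have fR: "finite R" by (simp add: R_def)
  have "(\<Sum>T\<in>Pow Q. (-1::int) ^ card T * v T) = (\<Sum>T\<in>Pow R. (-1::int) ^ card T * (c - (if p \<in> T then 1 else 0)))"
  proof (rule sum.mono_neutral_cong_right)
    show "finite (Pow Q)" using fQ by simp
    show "Pow R \<subseteq> Pow Q" using RQ by auto
    show "\<forall>i\<in>Pow Q - Pow R. (-1::int) ^ card i * v i = 0" using vT by auto
    show "\<And>x. x \<in> Pow R \<Longrightarrow> (-1::int) ^ card x * v x = (-1) ^ card x * (c - (if p \<in> x then 1 else 0))"
      using vT RQ by auto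
  qed
  also have "\<dots> = c * (\<Sum>T\<in>Pow R. (-1::int) ^ card T) - (\<Sum>T\<in>Pow R. (-1::int) ^ card T * (if p \<in> T then 1 else 0))"
    by (simp add: algebra_simps sum_subtractf sum_distrib_left)
  also have "\<dots> = (if R = {p} then 1 else 0)"
  proof -
    have "R \<noteq> {}"
    proof -
      have t1: "tp p dvd a" using tp_props(2)[OF p a pa] .
      have "a div tp p \<noteq> 1" using ne t1 by (metis dvd_mult_div_cancel mult.right_neutral)
      then obtain q where "prime q" "q dvd a div tp p" using prime_factor_nat by blast
      moreover have "a div tp p \<noteq> 0" using t1 a0 by (metis dvd_div_mult_self mult_0 neq0_conv)
      ultimately have "q \<in> R" unfolding R_def by (simp add: in_prime_factors_iff)
      thus ?thesis by auto
    qed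
    hence z: "(\<Sum>T\<in>Pow R. (-1::int) ^ card T) = 0" using alt_sum1[OF fR] by simp
    show ?thesis
    proof (cases "p \<in> R")
      case True
      thus ?thesis using z alt_sum2[OF fR True] by simp
    next
      case False
      have "(\<Sum>T\<in>Pow R. (-1::int) ^ card T * (if p \<in> T then 1 else 0)) = 0"
        by (rule sum.neutral) (use False in auto)
      thus ?thesis using z False by auto
    qed
  qed
  finally show ?thesis using s1 unfolding R_def by linarith
qed



lemma prod_half_bound:
  fixes n :: nat
  assumes "n \<ge> 1" "M \<subseteq> {1..n}"
  shows "(\<Prod>m\<in>M. 1 + (1/2::real)^m) \<le> 3 - 3 * (1/2)^n"
  using assms
proof (induction n arbitrary: M rule: nat_induct_at_least)
  case base
  hence "M = {} \<or> M = {1}" by auto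
  thus ?case by auto
next
  case (Suc n)
  define h :: real where "h = (1/2)^n"
  have h0: "0 \<le> h" "h \<le> 1/2"
  proof -
    show "0 \<le> h" by (simp add: h_def)
    have "(1/2::real)^n \<le> (1/2)^1" using Suc.hyps by (intro power_decreasing) auto
    thus "h \<le> 1/2" by (simp add: h_def)
  qed
  have hs: "(1/2::real)^(Suc n) = h/2" by (simp add: h_def)
  show ?case
  proof (cases "Suc n \<in> M")
    case False
    have "M \<subseteq> {1..n}"
    proof
      fix x assume x: "x \<in> M"
      hence "1 \<le> x" "x \<le> Suc n" using Suc.prems by auto
      moreover have "x \<noteq> Suc n" using x False by auto
      ultimately show "x \<in> {1..n}" by simp
    qed
    hence "(\<Prod>m\<in>M. 1 + (1/2::real)^m) \<le> 3 - 3 * h" using Suc.IH h_def by blast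
    thus ?thesis unfolding hs using h0 by linarith
  next
    case True
    define M' where "M' = M - {Suc n}"
    have M': "M' \<subseteq> {1..n}" using Suc.prems by (auto simp: M'_def)
    have fM: "finite M" using Suc.prems finite_subset by blast
    have eq: "(\<Prod>m\<in>M. 1 + (1/2::real)^m) = (1 + h/2) * (\<Prod>m\<in>M'. 1 + (1/2::real)^m)"
      using True fM unfolding M'_def by (simp add: prod.remove h_def)
    have P: "(\<Prod>m\<in>M'. 1 + (1/2::real)^m) \<le> 3 - 3 * h" using Suc.IH M' h_def by blast
    have "(1 + h/2) * (\<Prod>m\<in>M'. 1 + (1/2::real)^m) \<le> (1 + h/2) * (3 - 3*h)"
      using P h0 by (intro mult_left_mono) auto
    also have "\<dots> \<le> 3 - 3 * (h/2)" using h0 by (simp add: algebra_simps)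
    finally show ?thesis unfolding eq hs .
  qed
qed

lemma prod_F_bound:
  assumes "finite M" "0 \<notin> M"
  shows "(\<Prod>m\<in>M. F m) < 3 * 2 ^ (\<Sum>M)"
proof -
  define n where "n = max 1 (Max (insert 0 M))"
  have n1: "n \<ge> 1" by (simp add: n_def)
  have Mn: "M \<subseteq> {1..n}"
  proof
    fix m assume "m \<in> M"
    hence "m \<le> Max (insert 0 M)" using assms by simp
    moreover have "m \<noteq> 0" using assms(2) \<open>m \<in> M\<close> by metis
    ultimately show "m \<in> {1..n}" by (auto simp: n_def)
  qed
  have "real (\<Prod>m\<in>M. F m) = (\<Prod>m\<in>M. (2::real)^m * (1 + (1/2)^m))"
    by (simp add: F_def algebra_simps power_one_over)
  also have "\<dots> = (\<Prod>m\<in>M. (2::real)^m) * (\<Prod>m\<in>M. 1 + (1/2)^m)" by (rule prod.distrib)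
  also have "\<dots> = 2 ^ (\<Sum>M) * (\<Prod>m\<in>M. 1 + (1/2::real)^m)" by (simp add: power_sum)
  also have "\<dots> \<le> 2 ^ (\<Sum>M) * (3 - 3 * (1/2)^n)"
    using prod_half_bound[OF n1 Mn] by (intro mult_left_mono) auto
  also have "\<dots> < 2 ^ (\<Sum>M) * 3" by (intro mult_strict_left_mono) auto
  finally have "real (\<Prod>m\<in>M. F m) < real (3 * 2 ^ (\<Sum>M))" by simp
  thus ?thesis by linarith
qed

lemma totient_ie:
  assumes "a > 0"
  shows "(\<Sum>T\<in>Pow (prime_factors a). (-1::real) ^ card T * real (a div \<Prod>T)) = real (totient a)"
proof -
  define Q where "Q = prime_factors a"
  have fQ: "finite Q" by (simp add: Q_def)
  have "real (totient a) = real a * (\<Prod>p\<in>Q. 1 - 1 / real p)" unfolding Q_def by (rule totient_formula2)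
  also have "(\<Prod>p\<in>Q. 1 - 1 / real p) = (\<Sum>X\<in>Pow Q. (-1) ^ card X * (\<Prod>p\<in>X. 1 / real p) * (\<Prod>p\<in>Q - X. 1))"
    by (rule prod_diff_conv_sum[OF fQ])
  also have "real a * \<dots> = (\<Sum>X\<in>Pow Q. (-1) ^ card X * real (a div \<Prod>X))"
    unfolding sum_distrib_left
  proof (rule sum.cong)
    fix X assume X: "X \<in> Pow Q"
    note PQ = PQ_facts[OF assms X[unfolded Q_def]]
    have "(\<Prod>p\<in>X. 1 / real p) = 1 / real (\<Prod>X)" by (simp add: prod_dividef)
    moreover have "real (a div \<Prod>X) = real a / real (\<Prod>X)" by (rule real_of_nat_div[OF PQ(3)])
    ultimately show "real a * ((-1) ^ card X * (\<Prod>p\<in>X. 1 / real p) * (\<Prod>p\<in>Q - X. 1)) = (-1) ^ card X * real (a div \<Prod>X)"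
      by simp
  qed simp
  finally show ?thesis unfolding Q_def by simp
qed

lemma inj_m:
  fixes a :: nat
  assumes "a > 0"
  shows "inj_on (\<lambda>T. a div \<Prod>T) (Pow (prime_factors a))"
proof (rule inj_onI)
  fix T1 T2 assume T1: "T1 \<in> Pow (prime_factors a)" and T2: "T2 \<in> Pow (prime_factors a)"
    and e: "a div \<Prod>T1 = a div \<Prod>T2"
  note P1 = PQ_facts[OF assms T1] and P2 = PQ_facts[OF assms T2]
  have e1: "(a div \<Prod>T1) * \<Prod>T1 = a" using P1(3) by (rule dvd_div_mult_self)
  have e2: "(a div \<Prod>T2) * \<Prod>T2 = a" using P2(3) by (rule dvd_div_mult_self)
  have nz: "a div \<Prod>T1 \<noteq> 0"
  proof
    assume "a div \<Prod>T1 = 0"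
    hence "a = 0" using e1 by (metis mult_zero_left)
    thus False using assms by simp
  qed
  have "(a div \<Prod>T1) * \<Prod>T1 = (a div \<Prod>T1) * \<Prod>T2" using e1 e2 e by metis
  hence "\<Prod>T1 = \<Prod>T2" using nz by simp
  hence "prime_factors (\<Prod>T1) = prime_factors (\<Prod>T2)" by (rule arg_cong)
  thus "T1 = T2" unfolding prime_factors_prod_primes[OF P1(1,2)] prime_factors_prod_primes[OF P2(1,2)] .
qed



lemma pow_bound: "p \<ge> 5 \<Longrightarrow> 3 * p \<le> (2::nat)^(p-1)"
proof (induction p rule: nat_induct_at_least)
  case base then show ?case by simp
next
  case (Suc n)
  have "(2::nat)^(Suc n - 1) = 2 * 2^(n-1)" using Suc.hyps by (cases n) auto
  thus ?case using Suc by simp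
qed

lemma phi_ge4:
  assumes "odd a" "a \<ge> 5"
  shows "totient a \<ge> 4"
proof -
  have a0: "a > 0" using assms by simp
  show ?thesis
  proof (cases "9 dvd a")
    case True
    have "totient (3^2) = 6" using totient_prime_power[of 3 2] by simp
    hence "totient 9 = 6" by simp
    moreover have "totient 9 \<le> totient a" using totient_dvd_mono[OF True a0] .
    ultimately show ?thesis by simp
  next
    case n9: False
    show ?thesis
    proof (cases "\<exists>q. prime q \<and> q dvd a \<and> q \<ge> 5")
      case True
      then obtain q where q: "prime q" "q dvd a" "q \<ge> 5" by blast
      have "totient q \<le> totient a" using totient_dvd_mono[OF q(2) a0] .
      thus ?thesis using totient_prime[OF q(1)] q(3) by simp
    next
      case False
      have sub: "prime_factors a \<subseteq> {3}"
      proof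
        fix q assume "q \<in> prime_factors a"
        hence q: "prime q" "q dvd a" by (auto simp: in_prime_factors_iff)
        hence "q < 5" using False by auto
        moreover have "q \<ge> 2" using prime_ge_2_nat[OF q(1)] .
        moreover have "odd q" using q(2) assms(1) dvd_trans[of 2 q a] by blast
        ultimately have "q = 3" by presburger
        thus "q \<in> {3}" by simp
      qed
      have fa: "a = (\<Prod>p\<in>prime_factors a. p ^ multiplicity p a)" using prime_factorization_nat[OF a0] .
      have "a \<le> 3"
      proof (cases "prime_factors a = {}")
        case True
        thus ?thesis using fa by simp
      next
        case False
        hence pf: "prime_factors a = {3}" using sub by auto
        hence a3: "a = 3 ^ multiplicity 3 a" using fa by simp
        have "multiplicity 3 a \<le> 1"
        proof (rule ccontr)
          assume "\<not> multiplicity 3 a \<le> 1"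
          hence "(3::nat)^2 dvd 3 ^ multiplicity 3 a" by (intro le_imp_power_dvd) simp
          hence "9 dvd a" using a3 by simp
          thus False using n9 by simp
        qed
        hence "(3::nat) ^ multiplicity 3 a \<le> 3 ^ 1" by (intro power_increasing) auto
        thus ?thesis using a3 by simp
      qed
      thus ?thesis using assms by simp
    qed
  qed
qed


lemma prim:
  assumes a: "odd a" "a \<ge> 5"
  shows "\<exists>p. prime p \<and> p dvd F a \<and> (\<forall>b. odd b \<and> b < a \<longrightarrow> \<not> p dvd F b)"
proof (rule ccontr)
  assume H: "\<not> ?thesis"
  have a0: "a > 0" using a by simp
  have ne: "tp p \<noteq> a" if p: "prime p" "p dvd F a" for p
  proof -
    obtain b where b: "odd b" "b < a" "p dvd F b" using H p by blast
    have "tp p dvd b" using tp_props(3)[OF p(1) a(1) p(2) b(1)] b(3) by simp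
    moreover have "b > 0" using b(1) by (simp add: odd_pos)
    ultimately have "tp p \<le> b" by (simp add: dvd_imp_le)
    thus ?thesis using b(2) by simp
  qed
  define special where "special p \<longleftrightarrow> prime p \<and> p dvd F a \<and> prime_factors (a div tp p) = {p}" for p
  have sp: "p dvd a" "tp p < p" "tp p dvd a" "tp p > 0" if "special p" for p
  proof -
    have p: "prime p" "p dvd F a" "prime_factors (a div tp p) = {p}" using that special_def by auto
    show t: "tp p dvd a" using tp_props(2)[OF p(1) a(1) p(2)] .
    show "tp p > 0" using t a0 by (metis dvd_0_left_iff neq0_conv)
    have "p dvd a div tp p" using p(3) by (metis insertI1 in_prime_factors_iff)
    thus "p dvd a" using t by (metis dvd_div_mult_self dvd_mult2)
    show "tp p < p" using tp_lt[OF p(1) a(1) p(2)] .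
  qed
  have uniq: "p1 = p2" if s1: "special p1" and s2: "special p2" for p1 p2
  proof -
    have main: False if s1: "special p1" and s2: "special p2" and lt: "p1 < p2" for p1 p2
    proof -
      have p2: "prime p2" using s2 special_def by auto
      have "p2 dvd a" using sp(1)[OF s2] .
      moreover have "a = tp p1 * (a div tp p1)" using sp(3)[OF s1] by simp
      ultimately have "p2 dvd tp p1 * (a div tp p1)" by simp
      moreover have "\<not> p2 dvd a div tp p1"
      proof
        assume "p2 dvd a div tp p1"
        moreover have "a div tp p1 \<noteq> 0" using sp(3,4)[OF s1] a0 by (metis dvd_div_eq_0_iff neq0_conv)
        ultimately have "p2 \<in> prime_factors (a div tp p1)" using p2 by (simp add: in_prime_factors_iff)
        hence "p2 = p1" using s1 special_def by auto
        thus False using lt by simp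
      qed
      ultimately have "p2 dvd tp p1" using p2 prime_dvd_mult_iff by blast
      hence "p2 \<le> tp p1" using sp(4)[OF s1] by (simp add: dvd_imp_le)
      thus False using sp(2)[OF s1] lt by simp
    qed
    show ?thesis using main[OF s1 s2] main[OF s2 s1] by (cases "p1 < p2") (auto simp: not_less_iff_gr_or_eq)
  qed
  define s where "s = (if \<exists>p. special p then (THE p. special p) else 1)"
  have s_sp: "special s" if ex: "\<exists>p. special p"
  proof -
    obtain p where "special p" using ex by blast
    hence "(THE p. special p) = p" using uniq by blast
    thus ?thesis using \<open>special p\<close> ex s_def by simp
  qed
  have s0: "s > 0"
  proof (cases "\<exists>p. special p")
    case True thus ?thesis using s_sp special_def prime_gt_0_nat by blast
  qed (simp add: s_def)
  have Den0: "Den a > 0" unfolding Den_def by (rule prod_pos) (simp add: F_pos)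
  have Num0: "Num a > 0" unfolding Num_def by (rule prod_pos) (simp add: F_pos)
  have "Num a dvd s * Den a"
  proof (rule multiplicity_le_imp_dvd)
    show "Num a \<noteq> 0" using Num0 by simp
    fix p :: nat assume p: "prime p"
    show "multiplicity p (Num a) \<le> multiplicity p (s * Den a)"
    proof (cases "p dvd F a")
      case False
      have "\<not> p dvd Num a"
      proof
        assume "p dvd Num a"
        then obtain T where T: "T \<in> Ev a" "p dvd F (a div \<Prod>T)"
          unfolding Num_def using prime_dvd_prod_iff[of "Ev a" p] p by (auto simp: Ev_def)
        have TP: "T \<in> Pow (prime_factors a)" using T(1) by (simp add: Ev_def)
        note PQ = PQ_facts[OF a0 TP]
        have "odd (\<Prod>T)" using PQ(3) a(1) dvd_trans[of 2 "\<Prod>T" a] by blast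
        hence "F (a div \<Prod>T) dvd F ((a div \<Prod>T) * \<Prod>T)" by (rule F_dvd)
        hence "F (a div \<Prod>T) dvd F a" using PQ(3) by simp
        thus False using T(2) False dvd_trans by blast
      qed
      thus ?thesis by (simp add: not_dvd_imp_multiplicity_0)
    next
      case True
      have vd: "int (multiplicity p (Num a)) = int (multiplicity p (Den a)) + (if prime_factors (a div tp p) = {p} then 1 else 0)"
        using val_diff[OF a(1) p True ne[OF p True]] .
      have ms: "multiplicity p (s * Den a) = multiplicity p s + multiplicity p (Den a)"
        using prime_elem_multiplicity_mult_distrib[OF prime_imp_prime_elem[OF p], of s "Den a"] s0 Den0 by simp
      show ?thesis
      proof (cases "prime_factors (a div tp p) = {p}")
        case False thus ?thesis using vd ms by simp
      next
        case c: True
        hence "special p" using p True special_def by simp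
        hence "special s" using s_sp by blast
        hence "s = p" using uniq \<open>special p\<close> by blast
        hence "multiplicity p s = 1" using p by (simp add: multiplicity_prime)
        thus ?thesis using vd ms c by simp
      qed
    qed
  qed
  hence NsD: "Num a \<le> s * Den a" using s0 Den0 by (simp add: dvd_imp_le)
  define m where "m T = a div \<Prod>T" for T
  define SE where "SE = (\<Sum>T\<in>Ev a. m T)"
  define SO where "SO = (\<Sum>T\<in>Od a. m T)"
  have fE: "finite (Ev a)" "finite (Od a)" by (simp_all add: Ev_def Od_def)
  have "2 ^ SE \<le> Num a"
  proof -
    have "(2::nat) ^ SE = (\<Prod>T\<in>Ev a. 2 ^ m T)" unfolding SE_def by (rule power_sum)
    also have "\<dots> \<le> (\<Prod>T\<in>Ev a. F (m T))" by (rule prod_mono) (simp add: F_def)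
    finally show ?thesis by (simp add: Num_def m_def)
  qed
  moreover have "Den a < 3 * 2 ^ SO"
  proof -
    have inj: "inj_on m (Od a)" using inj_m[OF a0] unfolding m_def by (rule inj_on_subset) (auto simp: Od_def)
    have z: "0 \<notin> m ` Od a"
    proof
      assume "0 \<in> m ` Od a"
      then obtain T where T0: "0 = m T" and T1: "T \<in> Od a" by (rule imageE)
      hence T: "T \<in> Od a" "m T = 0" by simp_all
      have TP: "T \<in> Pow (prime_factors a)" using T(1) by (simp add: Od_def)
      note PQ = PQ_facts[OF a0 TP]
      have "(a div \<Prod>T) * \<Prod>T = a" using PQ(3) by (rule dvd_div_mult_self)
      thus False using T(2) a0 unfolding m_def by (metis mult_zero_left less_irrefl)
    qed
    have "Den a = (\<Prod>x\<in>m ` Od a. F x)" unfolding Den_def prod.reindex[OF inj] m_def by (simp add: comp_def)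
    moreover have "SO = \<Sum>(m ` Od a)" unfolding SO_def sum.reindex[OF inj] by (simp add: comp_def)
    ultimately show ?thesis using prod_F_bound[OF finite_imageI[OF fE(2)] z] by simp
  qed
  moreover have "SE = SO + totient a"
  proof -
    have "real (totient a) = (\<Sum>T\<in>Pow (prime_factors a). (-1::real) ^ card T * real (m T))"
      using totient_ie[OF a0] unfolding m_def by simp
    also have "\<dots> = (\<Sum>T\<in>Pow (prime_factors a). if even (card T) then real (m T) else - real (m T))"
      by (rule sum.cong) auto
    also have "\<dots> = (\<Sum>T\<in>Ev a. real (m T)) + (\<Sum>T\<in>Od a. - real (m T))"
    proof -
      have EvE: "Pow (prime_factors a) \<inter> {T. even (card T)} = Ev a" unfolding Ev_def by auto
      have OdE: "Pow (prime_factors a) \<inter> - {T. even (card T)} = Od a" unfolding Od_def by auto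
      have fP: "finite (Pow (prime_factors a))" by simp
      show ?thesis using sum.If_cases[OF fP, of "\<lambda>T. even (card T)" "\<lambda>T. real (m T)" "\<lambda>T. - real (m T)"] unfolding EvE OdE .
    qed
    also have "\<dots> = real SE - real SO" unfolding SE_def SO_def by (simp add: sum_negf)
    finally show ?thesis by linarith
  qed
  ultimately have "2 ^ (SO + totient a) < s * (3 * 2 ^ SO)"
    using NsD s0 by (meson le_less_trans mult_strict_left_mono order_trans)
  hence "2 ^ totient a * 2 ^ SO < (3 * s) * 2 ^ SO" by (simp add: power_add algebra_simps)
  hence lt: "2 ^ totient a < 3 * s" by simp
  have phi4: "totient a \<ge> 4" using phi_ge4[OF a] .
  have "3 * s \<le> 2 ^ totient a"
  proof (cases "\<exists>p. special p")
    case False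
    hence "s = 1" by (simp add: s_def)
    moreover have "(2::nat)^4 \<le> 2 ^ totient a" using phi4 by (intro power_increasing) auto
    ultimately show ?thesis by simp
  next
    case True
    hence ss: "special s" by (rule s_sp)
    have sp1: "prime s" using ss special_def by auto
    have "totient s \<le> totient a" using totient_dvd_mono[OF sp(1)[OF ss] a0] .
    hence ts: "s - 1 \<le> totient a" using totient_prime[OF sp1] by simp
    show ?thesis
    proof (cases "s \<ge> 5")
      case True
      have "3 * s \<le> 2 ^ (s - 1)" using pow_bound[OF True] .
      also have "\<dots> \<le> 2 ^ totient a" using ts by (intro power_increasing) auto
      finally show ?thesis .
    next
      case False
      have "(2::nat)^4 \<le> 2 ^ totient a" using phi4 by (intro power_increasing) auto
      thus ?thesis using False by simp
    qed
  qed
  thus False using lt by simp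
qed



definition u :: "nat \<Rightarrow> nat" where
  "u k = (if k = 0 then 5 else 5 * 3^(k-1) * F (2*k-1))"

lemma fac_u: "fac k = of_nat (u k) / 2^(k-1)"
proof (cases "k = 0")
  case True thus ?thesis by (simp add: fac_def u_def)
next
  case False
  have e1: "int k - 1 = int (k - 1)" using False by simp
  have e2: "2 * int k - 1 = int (2*k - 1)" using False by simp
  have "fac k = 5 * (3/2)^(k-1) * (2^(2*k-1) + 1)"
    unfolding fac_def e1 e2 power_int_of_nat ..
  also have "\<dots> = of_nat (u k) / 2^(k-1)"
    using False by (simp add: u_def F_def power_divide distrib_left add_divide_distrib)
  finally show ?thesis .
qed

lemma u_odd: "odd (u k)"
  by (simp add: u_def F_def)

lemma u_pos: "u k > 0" by (simp add: u_def F_def)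

definition U :: "nat list \<Rightarrow> nat" where "U xs = prod_list (map u xs)"
definition D :: "nat list \<Rightarrow> nat" where "D xs = sum_list (map (\<lambda>k. k - 1) xs)"

lemma prod_fac: "prod_list (map fac xs) = of_nat (U xs) / 2 ^ D xs"
  by (induction xs) (simp_all add: U_def D_def fac_u power_add)

lemma U_odd: "odd (U xs)"
  by (induction xs) (simp_all add: U_def u_odd)

lemma prod_nth: "(\<Prod>i<length xs. fac (xs ! i)) = prod_list (map fac xs)"
  by (simp add: prod.list_conv_set_nth atLeast0LessThan)

lemma odd_pow2_eq:
  fixes x y i j :: nat
  assumes "odd x" "odd y" "x * 2^i = y * 2^j"
  shows "i = j \<and> x = y"
proof -
  have "i = j"
  proof (rule ccontr)
    assume "i \<noteq> j"
    then consider "i < j" | "j < i" by linarith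
    thus False
    proof cases
      case 1
      have "x * 2^i = (y * 2^(j-i)) * 2^i" using assms(3) 1
        by (simp add: power_add[symmetric] algebra_simps)
      hence "x = y * 2^(j-i)" by simp
      thus False using assms(1) 1 by simp
    next
      case 2
      have "y * 2^j = (x * 2^(i-j)) * 2^j" using assms(3) 2
        by (simp add: power_add[symmetric] algebra_simps)
      hence "y = x * 2^(i-j)" by simp
      thus False using assms(2) 2 by simp
    qed
  qed
  thus ?thesis using assms(3) by simp
qed

lemma prime_dvd_U:
  assumes "prime p" "p dvd U ys"
  shows "\<exists>y\<in>set ys. p dvd u y"
  using assms(2)
proof (induction ys)
  case Nil thus ?case using assms(1) by (simp add: U_def)
next
  case (Cons y ys)
  hence "p dvd u y * U ys" by (simp add: U_def)
  hence "p dvd u y \<or> p dvd U ys" using prime_dvd_mult_iff[OF assms(1)] by blast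
  thus ?case using Cons.IH by auto
qed

lemma five_not_dvd_F:
  assumes "odd a" shows "\<not> 5 dvd F a"
proof
  assume h: "5 dvd F a"
  obtain j where j: "a = 2*j + 1" using assms oddE by blast
  have c: "[int 4 = -1] (mod 5)" by (simp add: cong_iff_dvd_diff)
  have "[int 4 ^ j = (-1)^j] (mod 5)" by (rule cong_pow[OF c])
  hence "[2 * int 4 ^ j + 1 = 2 * (-1)^j + 1] (mod 5)" by (intro cong_add cong_mult) auto
  moreover have "int (F a) = 2 * int 4 ^ j + 1" unfolding F_def j by (simp add: power_mult)
  moreover have "(5::int) dvd int (F a)" using h by (metis int_dvd_int_iff of_nat_numeral)
  ultimately have "(5::int) dvd 2 * (-1)^j + 1" by (metis cong_dvd_iff)
  thus False by (cases "even j") auto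
qed

lemma contra:
  assumes "\<forall>y\<in>set ys. y < K" and "U (K # xs) = U ys" and "D (K # xs) = D ys"
  shows False
proof -
  consider "K = 0" | "K = 1" | "K = 2" | "K \<ge> 3" by linarith
  thus False
  proof cases
    case 1
    hence "ys = []" using assms(1) by (cases ys) auto
    hence "U (K # xs) = 1" using assms(2) by (simp add: U_def)
    moreover have "5 dvd U (K # xs)" using 1 by (simp add: U_def u_def)
    ultimately show False by simp
  next
    case 2
    have ys0: "\<forall>y\<in>set ys. y = 0" using assms(1) 2 by auto
    have "U ys = 5 ^ length ys" using ys0 by (induction ys) (auto simp: U_def u_def)
    moreover have "3 dvd U (K # xs)" using 2 by (simp add: U_def u_def F_def)
    ultimately have "3 dvd (5::nat) ^ length ys" using assms(2) by simp
    moreover have "prime (3::nat)" by simp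
    ultimately have "(3::nat) dvd 5" using prime_dvd_power by blast
    thus False by simp
  next
    case 3
    have "D ys = 0" using assms(1) 3 by (induction ys) (auto simp: D_def)
    moreover have "D (K # xs) \<ge> 1" using 3 by (simp add: D_def)
    ultimately show False using assms(3) by simp
  next
    case 4
    define a where "a = 2*K - 1"
    have a: "odd a" "a \<ge> 5" using 4 by (auto simp: a_def)
    obtain p where p: "prime p" "p dvd F a" and pn: "\<forall>b. odd b \<and> b < a \<longrightarrow> \<not> p dvd F b"
      using prim[OF a] by blast
    have "p dvd u K" using p(2) 4 unfolding u_def a_def by simp
    hence "p dvd U (K # xs)" by (simp add: U_def)
    hence "p dvd U ys" using assms(2) by simp
    then obtain y where y: "y \<in> set ys" "p dvd u y" using prime_dvd_U[OF p(1)] by blast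
    have p3: "p \<noteq> 3" using pn[rule_format, of 1] a by (auto simp: F_def)
    have p5: "p \<noteq> 5" using five_not_dvd_F[OF a(1)] p(2) by auto
    show False
    proof (cases "y = 0")
      case True
      hence "p dvd 5" using y(2) by (simp add: u_def)
      hence "p = 5" using primes_dvd_imp_eq[of p 5] p(1) by simp
      thus False using p5 by simp
    next
      case False
      hence "p dvd 5 * 3^(y-1) * F (2*y-1)" using y(2) by (simp add: u_def)
      hence "p dvd 5 * 3^(y-1) \<or> p dvd F (2*y-1)" using prime_dvd_mult_iff[OF p(1)] by blast
      hence "p dvd 5 \<or> p dvd 3^(y-1) \<or> p dvd F (2*y-1)" using prime_dvd_mult_iff[OF p(1)] by blast
      moreover have "\<not> p dvd 5"
      proof
        assume "p dvd 5" hence "p = 5" using primes_dvd_imp_eq[of p 5] p(1) by simp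
        thus False using p5 by simp
      qed
      moreover have "\<not> p dvd 3^(y-1)"
      proof
        assume "p dvd 3^(y-1)" hence "p dvd 3" using p(1) prime_dvd_power by blast
        hence "p = 3" using primes_dvd_imp_eq[of p 3] p(1) by simp
        thus False using p3 by simp
      qed
      moreover have "\<not> p dvd F (2*y-1)"
      proof
        assume h: "p dvd F (2*y-1)"
        have "y < K" using y(1) assms(1) by auto
        hence "2*y-1 < a" using False by (simp add: a_def)
        moreover have "odd (2*y-1)" using False by simp
        ultimately show False using pn h by blast
      qed
      ultimately show False by blast
    qed
  qed
qed


lemma main_ind:
  assumes "sorted_wrt (\<ge>) ks" "sorted_wrt (\<ge>) ls" "U ks = U ls" "D ks = D ls"
  shows "ks = ls"
  using assms
proof (induction ks arbitrary: ls)
  case Nil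
  show ?case
  proof (cases ls)
    case (Cons l ls')
    have "U (l # ls') = U []" "D (l # ls') = D []" using Nil Cons by auto
    thus ?thesis using contra[of "[]" l ls'] by simp
  qed simp
next
  case (Cons k ks)
  show ?case
  proof (cases "ls = []")
    case True
    have "U (k # ks) = U []" "D (k # ks) = D []" using Cons.prems True by auto
    thus ?thesis using contra[of "[]" k ks] by simp
  next
    case False
    then obtain l ls' where Cons2: "ls = l # ls'" by (cases ls) auto
    have sk: "\<forall>y\<in>set ks. y \<le> k" "sorted_wrt (\<ge>) ks" using Cons.prems(1) by auto
    have sl: "\<forall>y\<in>set ls'. y \<le> l" "sorted_wrt (\<ge>) ls'" using Cons.prems(2) Cons2 by auto
    consider "k = l" | "l < k" | "k < l" by linarith
    thus ?thesis
    proof cases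
      case 1
      have "u k * U ks = u k * U ls'" using Cons.prems(3) Cons2 1 by (simp add: U_def)
      hence "U ks = U ls'" using u_pos[of k] by simp
      moreover have "D ks = D ls'" using Cons.prems(4) Cons2 1 by (simp add: D_def)
      ultimately have "ks = ls'" using Cons.IH sk(2) sl(2) by blast
      thus ?thesis using 1 Cons2 by simp
    next
      case 2
      have "\<forall>y\<in>set (l # ls'). y < k" using sl(1) 2 by auto
      thus ?thesis using contra[of "l # ls'" k ks] Cons.prems(3,4) Cons2 by simp
    next
      case 3
      have "\<forall>y\<in>set (k # ks). y < l" using sk(1) 3 by auto
      thus ?thesis using contra[of "k # ks" l ls'] Cons.prems(3,4) Cons2 by simp
    qed
  qed
qed

theorem lemma5:
  fixes ks ls :: "nat list"
  assumes "sorted_wrt (\<ge>) ks" and "sorted_wrt (\<ge>) ls"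
    and "(\<Prod>i<length ks. fac (ks ! i)) = (\<Prod>j<length ls. fac (ls ! j))"
  shows "length ks = length ls \<and> ks = ls"
proof -
  have "(of_nat (U ks) :: rat) / 2 ^ D ks = of_nat (U ls) / 2 ^ D ls"
    using assms(3) unfolding prod_nth prod_fac .
  hence "(of_nat (U ks) :: rat) * 2 ^ D ls = of_nat (U ls) * 2 ^ D ks"
    by (simp add: field_simps)
  hence "of_nat (U ks * 2 ^ D ls) = (of_nat (U ls * 2 ^ D ks) :: rat)" by simp
  hence "U ks * 2 ^ D ls = U ls * 2 ^ D ks" by (simp only: of_nat_eq_iff)
  hence "D ls = D ks \<and> U ks = U ls" using odd_pow2_eq[OF U_odd U_odd] by blast
  hence "ks = ls" using main_ind[OF assms(1,2)] by simp
  thus ?thesis by simp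
qed


end
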